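(* Let $k\ge1$, $G=(V,E)$ an inductively $k$-independent graph with $k$-independence ordering $v_1,\dots,v_n$, $f:2^V\to\mathbb{R}_{\ge0}$ monotone submodular with $f(\emptyset)=0$, and $\beta>0$. Run algorithm PD-MON (described in the context) and let $\mu=f(S_{\mathrm{end}})$, $y_i=(1+\beta)w_i$ for all $i$, and $z_i=0$ if $v_i\in S_{\mathrm{end}}$ and $z_i=f_{S_i}(v_i)$ otherwise, where $S_i$ is the stack just before $v_i$ is processed. Then $(\mu,y,z)$ is a feasible solution of the linear program with constraints \[ \mu+\sum_{v_i\in L} z_i\ge f(L)\ \ \text{for all } L\subseteq V,\qquad y_i+\sum_{v_j\in B_i}y_j\ge z_i\ \text{ and } y_i\ge0\ \ \text{for all } i\in[n], \] where $B_i=N(v_i)\cap\{v_1,\dots,v_{i-1}\}$ ($\mu$ and $z$ are unrestricted in sign).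
   Context: $N(v)$ is the neighbourhood of $v$ (excluding $v$); $G$ is inductively $k$-independent with $k$-independence ordering $v_1,\dots,v_n$ if for every $i$, $G[N(v_i)\cap\{v_i,\dots,v_n\}]$ has no independent set of size more than $k$. For $S\subseteq V$, $f_S(v)=f(S\cup\{v\})-f(S)$. Algorithm PD-MON (parameter $\beta>0$). Phase 1: start with $S=\emptyset$ (a stack) and $w_1=\dots=w_n=0$. For $i=1,\dots,n$: let $C_i=N(v_i)\cap S$ for the current $S$; if $f_S(v_i)>(1+\beta)\sum_{v_j\in C_i}w_j$, set $w_i=f_S(v_i)-\sum_{v_j\in C_i}w_j$ (with $S$ the set before insertion) and push $v_i$ onto $S$; otherwise leave $w_i=0$. Let $S_{\mathrm{end}}$ be $S$ at the end of Phase 1. Phase 2: with $S_{\mathrm{out}}=\emptyset$, pop vertices of $S_{\mathrm{end}}$ in reverse insertion order, adding a popped $v$ to $S_{\mathrm{out}}$ whenever $S_{\mathrm{out}}\cup\{v\}$ is independent. Output $S_{\mathrm{out}}$. *)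

theory Defs
  imports Complex_Main
begin

text \<open>Graphs: vertex type 'a, adjacency relation E, vertex set V = set vs where the
  list vs is the k-independence ordering v_1, ..., v_n (0-indexed: v_i = vs ! i).\<close>

definition simple_graph_on :: "'a set \<Rightarrow> ('a \<Rightarrow> 'a \<Rightarrow> bool) \<Rightarrow> bool" where
  "simple_graph_on V E \<longleftrightarrow> finite V \<and> (\<forall>x y. E x y \<longrightarrow> E y x) \<and> (\<forall>x. \<not> E x x)
     \<and> (\<forall>x y. E x y \<longrightarrow> x \<in> V \<and> y \<in> V)"

definition nbhd :: "('a \<Rightarrow> 'a \<Rightarrow> bool) \<Rightarrow> 'a \<Rightarrow> 'a set" where
  "nbhd E v = {u. E v u}"

definition independent :: "('a \<Rightarrow> 'a \<Rightarrow> bool) \<Rightarrow> 'a set \<Rightarrow> bool" where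
  "independent E I \<longleftrightarrow> (\<forall>x\<in>I. \<forall>y\<in>I. \<not> E x y)"

definition k_independence_ordering :: "('a \<Rightarrow> 'a \<Rightarrow> bool) \<Rightarrow> nat \<Rightarrow> 'a list \<Rightarrow> bool" where
  "k_independence_ordering E k vs \<longleftrightarrow> distinct vs \<and>
     (\<forall>i < length vs. \<forall>I. I \<subseteq> nbhd E (vs ! i) \<inter> set (drop i vs) \<and> independent E I
        \<longrightarrow> card I \<le> k)"

definition monotone_set_fun :: "'a set \<Rightarrow> ('a set \<Rightarrow> real) \<Rightarrow> bool" where
  "monotone_set_fun V f \<longleftrightarrow> (\<forall>A B. A \<subseteq> B \<and> B \<subseteq> V \<longrightarrow> f A \<le> f B)"

definition submodular :: "'a set \<Rightarrow> ('a set \<Rightarrow> real) \<Rightarrow> bool" where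
  "submodular V f \<longleftrightarrow> (\<forall>A B. A \<subseteq> V \<and> B \<subseteq> V \<longrightarrow> f (A \<union> B) + f (A \<inter> B) \<le> f A + f B)"

definition marg :: "('a set \<Rightarrow> real) \<Rightarrow> 'a set \<Rightarrow> 'a \<Rightarrow> real" where
  "marg f S v = f (insert v S) - f S"

text \<open>Phase 1 of PD-MON. State: (stack as list, top first; weights w indexed by vertex,
  which is unambiguous since the ordering is distinct).\<close>
definition pd_step :: "('a set \<Rightarrow> real) \<Rightarrow> ('a \<Rightarrow> 'a \<Rightarrow> bool) \<Rightarrow> real
     \<Rightarrow> 'a list \<times> ('a \<Rightarrow> real) \<Rightarrow> 'a \<Rightarrow> 'a list \<times> ('a \<Rightarrow> real)" where
  "pd_step f E \<beta> st v =
     (let S = set (fst st); w = snd st; C = nbhd E v \<inter> S in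
      if marg f S v > (1 + \<beta>) * (\<Sum>u\<in>C. w u)
      then (v # fst st, w(v := marg f S v - (\<Sum>u\<in>C. w u)))
      else st)"

definition pd_phase1_prefix :: "('a set \<Rightarrow> real) \<Rightarrow> ('a \<Rightarrow> 'a \<Rightarrow> bool) \<Rightarrow> real \<Rightarrow> 'a list
     \<Rightarrow> nat \<Rightarrow> 'a list \<times> ('a \<Rightarrow> real)" where
  "pd_phase1_prefix f E \<beta> vs i = foldl (pd_step f E \<beta>) ([], (\<lambda>_. 0)) (take i vs)"

definition stack_before :: "('a set \<Rightarrow> real) \<Rightarrow> ('a \<Rightarrow> 'a \<Rightarrow> bool) \<Rightarrow> real \<Rightarrow> 'a list
     \<Rightarrow> nat \<Rightarrow> 'a set" where
  "stack_before f E \<beta> vs i = set (fst (pd_phase1_prefix f E \<beta> vs i))"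

definition S_end :: "('a set \<Rightarrow> real) \<Rightarrow> ('a \<Rightarrow> 'a \<Rightarrow> bool) \<Rightarrow> real \<Rightarrow> 'a list \<Rightarrow> 'a set" where
  "S_end f E \<beta> vs = set (fst (pd_phase1_prefix f E \<beta> vs (length vs)))"

definition pd_weights :: "('a set \<Rightarrow> real) \<Rightarrow> ('a \<Rightarrow> 'a \<Rightarrow> bool) \<Rightarrow> real \<Rightarrow> 'a list \<Rightarrow> 'a \<Rightarrow> real" where
  "pd_weights f E \<beta> vs = snd (pd_phase1_prefix f E \<beta> vs (length vs))"

text \<open>Phase 2 (not needed for the lemma, included for completeness): pop in reverse
  insertion order (i.e. top of stack first), greedily keeping independence.\<close>
definition pd_output :: "('a set \<Rightarrow> real) \<Rightarrow> ('a \<Rightarrow> 'a \<Rightarrow> bool) \<Rightarrow> real \<Rightarrow> 'a list \<Rightarrow> 'a set" where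
  "pd_output f E \<beta> vs =
     foldl (\<lambda>Sout v. if independent E (insert v Sout) then insert v Sout else Sout) {}
       (fst (pd_phase1_prefix f E \<beta> vs (length vs)))"

end

theory Submission
  imports Defs
begin

abbreviation PP where "PP f E \<beta> vs \<equiv> pd_phase1_prefix f E \<beta> vs"

definition cnd where
  "cnd f E \<beta> vs m = (marg f (stack_before f E \<beta> vs m) (vs!m) > (1+\<beta>) *
     (\<Sum>u\<in>nbhd E (vs!m) \<inter> stack_before f E \<beta> vs m. snd (PP f E \<beta> vs m) u))"

definition WW where
  "WW f E \<beta> vs m = marg f (stack_before f E \<beta> vs m) (vs!m) -
     (\<Sum>u\<in>nbhd E (vs!m) \<inter> stack_before f E \<beta> vs m. snd (PP f E \<beta> vs m) u)"

lemma PP_Suc: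
  "PP f E \<beta> vs (Suc j) = (if j < length vs then pd_step f E \<beta> (PP f E \<beta> vs j) (vs!j)
     else PP f E \<beta> vs j)"
  unfolding pd_phase1_prefix_def
  by (auto simp: take_Suc_conv_app_nth)

lemma PP_step_fst:
  "j < length vs \<Longrightarrow> fst (PP f E \<beta> vs (Suc j)) =
     (if cnd f E \<beta> vs j then vs!j # fst (PP f E \<beta> vs j) else fst (PP f E \<beta> vs j))"
  by (simp add: PP_Suc pd_step_def Let_def cnd_def stack_before_def)

lemma PP_step_snd:
  "j < length vs \<Longrightarrow> snd (PP f E \<beta> vs (Suc j)) =
     (if cnd f E \<beta> vs j then (snd (PP f E \<beta> vs j))(vs!j := WW f E \<beta> vs j)
      else snd (PP f E \<beta> vs j))"
  by (simp add: PP_Suc pd_step_def Let_def cnd_def WW_def stack_before_def)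

lemma PP_sub: "set (fst (PP f E \<beta> vs j)) \<subseteq> set vs"
proof (induction j)
  case 0 then show ?case by (simp add: pd_phase1_prefix_def)
next
  case (Suc j)
  show ?case
  proof (cases "j < length vs")
    case True then show ?thesis using Suc by (auto simp: PP_step_fst)
  next
    case False then show ?thesis using Suc by (simp add: PP_Suc[of f E \<beta> vs j])
  qed
qed

lemma PP_mem:
  assumes "distinct vs" "m < length vs"
  shows "(vs!m \<in> set (fst (PP f E \<beta> vs j))) = (m < j \<and> cnd f E \<beta> vs m)"
proof (induction j)
  case 0 then show ?case by (simp add: pd_phase1_prefix_def)
next
  case (Suc j)
  show ?case
  proof (cases "j < length vs")
    case True
    have "vs!m = vs!j \<longleftrightarrow> m = j" using assms True by (simp add: nth_eq_iff_index_eq)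
    then show ?thesis using Suc True by (auto simp: PP_step_fst)
  next
    case False
    then show ?thesis using Suc assms by (auto simp: PP_Suc[of f E \<beta> vs j])
  qed
qed

lemma PP_wt:
  assumes "distinct vs" "m < length vs"
  shows "snd (PP f E \<beta> vs j) (vs!m) = (if m < j \<and> cnd f E \<beta> vs m then WW f E \<beta> vs m else 0)"
proof (induction j)
  case 0 then show ?case by (simp add: pd_phase1_prefix_def)
next
  case (Suc j)
  show ?case
  proof (cases "j < length vs")
    case True
    have "vs!m = vs!j \<longleftrightarrow> m = j" using assms True by (simp add: nth_eq_iff_index_eq)
    then show ?thesis using Suc True by (auto simp: PP_step_snd)
  next
    case False
    then show ?thesis using Suc assms by (auto simp: PP_Suc[of f E \<beta> vs j])
  qed
qed

lemma PP_nonneg: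
  assumes "\<beta> > 0"
  shows "snd (PP f E \<beta> vs j) u \<ge> 0"
proof (induction j arbitrary: u)
  case 0 then show ?case by (simp add: pd_phase1_prefix_def)
next
  case (Suc j)
  show ?case
  proof (cases "j < length vs")
    case True
    let ?s = "\<Sum>u\<in>nbhd E (vs!j) \<inter> stack_before f E \<beta> vs j. snd (PP f E \<beta> vs j) u"
    have s: "?s \<ge> 0" by (rule sum_nonneg) (use Suc in auto)
    have "cnd f E \<beta> vs j \<Longrightarrow> WW f E \<beta> vs j \<ge> 0"
    proof -
      assume c: "cnd f E \<beta> vs j"
      have "\<beta> * ?s \<ge> 0" using s assms by simp
      then show ?thesis using c unfolding cnd_def WW_def by (simp add: algebra_simps)
    qed
    then show ?thesis using Suc True by (auto simp: PP_step_snd)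
  next
    case False
    then show ?thesis using Suc by (auto simp: PP_Suc[of f E \<beta> vs j])
  qed
qed

lemma marg_nonneg:
  assumes "monotone_set_fun V f" "S \<subseteq> V" "v \<in> V"
  shows "marg f S v \<ge> 0"
proof -
  have "f S \<le> f (insert v S)" using assms unfolding monotone_set_fun_def by blast
  then show ?thesis unfolding marg_def by simp
qed

lemma marg_dimin:
  assumes "monotone_set_fun V f" "submodular V f" "S \<subseteq> T" "T \<subseteq> V" "v \<in> V"
  shows "marg f T v \<le> marg f S v"
proof (cases "v \<in> T")
  case True
  then have "marg f T v = 0" by (simp add: marg_def insert_absorb)
  then show ?thesis using marg_nonneg[OF assms(1), of S v] assms by auto
next
  case False
  have "insert v S \<union> T = insert v T" "insert v S \<inter> T = S" using assms False by auto
  moreover have "insert v S \<subseteq> V" using assms by auto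
  ultimately have "f (insert v T) + f S \<le> f (insert v S) + f T"
    using assms(2,4) unfolding submodular_def by metis
  then show ?thesis unfolding marg_def by simp
qed

lemma sub_union:
  assumes "submodular V f" "finite B" "B \<subseteq> V" "T \<subseteq> V"
  shows "f (T \<union> B) \<le> f T + (\<Sum>b\<in>B. marg f T b)"
  using assms(2,3)
proof (induction B rule: finite_induct)
  case empty then show ?case by simp
next
  case (insert b B)
  have "f (T \<union> insert b B) \<le> f (T \<union> B) + marg f T b"
  proof (cases "b \<in> T")
    case True
    then show ?thesis by (simp add: marg_def insert_absorb)
  next
    case False
    have 1: "insert b T \<inter> (T \<union> B) = T" using insert False by auto
    have 2: "insert b T \<union> (T \<union> B) = T \<union> insert b B" by auto
    have "insert b T \<subseteq> V" "T \<union> B \<subseteq> V" using insert assms(4) by auto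
    then have "f (T \<union> insert b B) + f T \<le> f (insert b T) + f (T \<union> B)"
      using assms(1) 1 2 unfolding submodular_def by metis
    then show ?thesis unfolding marg_def by simp
  qed
  then show ?case using insert by simp
qed

theorem lemma2:
  fixes E :: "'a \<Rightarrow> 'a \<Rightarrow> bool" and vs :: "'a list" and k :: nat
    and f :: "'a set \<Rightarrow> real" and \<beta> :: real
  assumes "k \<ge> 1"
    and "simple_graph_on (set vs) E"
    and "k_independence_ordering E k vs"
    and "\<forall>A. A \<subseteq> set vs \<longrightarrow> f A \<ge> 0"
    and "monotone_set_fun (set vs) f"
    and "submodular (set vs) f"
    and "f {} = 0"
    and "\<beta> > 0"
  shows
    "let n = length vs; Send = S_end f E \<beta> vs; w = pd_weights f E \<beta> vs;
         \<mu> = f Send;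
         y = (\<lambda>i. (1 + \<beta>) * w (vs ! i));
         z = (\<lambda>i. if vs ! i \<in> Send then 0 else marg f (stack_before f E \<beta> vs i) (vs ! i))
     in (\<forall>L \<subseteq> {..<n}. \<mu> + (\<Sum>i\<in>L. z i) \<ge> f ((\<lambda>i. vs ! i) ` L))
      \<and> (\<forall>i < n. y i + (\<Sum>j \<in> {j. j < i \<and> E (vs ! i) (vs ! j)}. y j) \<ge> z i)
      \<and> (\<forall>i < n. y i \<ge> 0)"
proof -
  define n where "n = length vs"
  define Send where "Send = S_end f E \<beta> vs"
  define w where "w = pd_weights f E \<beta> vs"
  define y where "y = (\<lambda>i. (1 + \<beta>) * w (vs ! i))"
  define z where "z = (\<lambda>i. if vs ! i \<in> Send then 0 else marg f (stack_before f E \<beta> vs i) (vs ! i))"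
  define S where "S = stack_before f E \<beta> vs"
  have dist: "distinct vs" using assms(3) unfolding k_independence_ordering_def by simp
  have V: "set vs = (\<lambda>i. vs!i) ` {..<n}" unfolding n_def by (auto simp: set_conv_nth)
  have mon: "monotone_set_fun (set vs) f" and sm: "submodular (set vs) f" using assms by auto
  have bpos: "\<beta> > 0" using assms by simp
  have Sendsub: "Send \<subseteq> set vs" unfolding Send_def S_end_def by (rule PP_sub)
  have Ssub: "S i \<subseteq> set vs" for i unfolding S_def stack_before_def by (rule PP_sub)
  have wnn: "w u \<ge> 0" for u unfolding w_def pd_weights_def by (rule PP_nonneg[OF bpos])
  have ynn: "y i \<ge> 0" for i unfolding y_def using wnn bpos by simp
  have memSend: "vs!m \<in> Send \<longleftrightarrow> cnd f E \<beta> vs m" if "m < n" for m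
    using PP_mem[OF dist, of m f E \<beta> "length vs"] that unfolding Send_def S_end_def n_def by simp
  have memS: "vs!m \<in> S i \<longleftrightarrow> m < i \<and> cnd f E \<beta> vs m" if "m < n" for m i
  proof -
    have "m < length vs" using that n_def by simp
    from PP_mem[OF dist this, of f E \<beta> i] show ?thesis unfolding S_def stack_before_def .
  qed
  have SsubSend: "S i \<subseteq> Send" for i
  proof
    fix u assume u: "u \<in> S i"
    have "u \<in> (\<lambda>i. vs!i) ` {..<n}" using u Ssub V by auto
    then obtain m where m: "m < n" "u = vs!m" by auto
    have "cnd f E \<beta> vs m" using memS[OF m(1), of i] u m(2) by simp
    then show "u \<in> Send" using memSend[OF m(1)] m(2) by simp
  qed
  have wS: "snd (PP f E \<beta> vs i) u = w u" if "u \<in> S i" for u i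
  proof -
    have "u \<in> (\<lambda>i. vs!i) ` {..<n}" using that Ssub V by auto
    then obtain m where m: "m < n" "u = vs!m" by auto
    have "m < i" "cnd f E \<beta> vs m" using memS[OF m(1), of i] m(2) that by auto
    moreover have "m < length vs" using m n_def by simp
    ultimately show ?thesis unfolding w_def pd_weights_def m(2)
      using PP_wt[OF dist, of m f E \<beta>] by simp
  qed
  have znn: "z i \<ge> 0" if "i < n" for i
    unfolding z_def S_def[symmetric] using marg_nonneg[OF mon Ssub, of "vs!i" i] that n_def
    by simp
  have C1: "f Send + (\<Sum>i\<in>L. z i) \<ge> f ((\<lambda>i. vs ! i) ` L)" if L: "L \<subseteq> {..<n}" for L
  proof -
    let ?A = "(\<lambda>i. vs ! i) ` L"
    let ?L' = "{i\<in>L. vs!i \<notin> Send}"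
    have Asub: "?A \<subseteq> set vs" using L V by auto
    have finL: "finite L" using L finite_subset by blast
    have injL: "inj_on (\<lambda>i. vs ! i) L"
    proof (rule inj_onI)
      fix x y assume "x \<in> L" "y \<in> L" "vs ! x = vs ! y"
      then show "x = y" using dist L nth_eq_iff_index_eq[OF dist, of x y] unfolding n_def by auto
    qed
    have "Send \<union> ?A \<subseteq> set vs" using Asub Sendsub by blast
    then have "f ?A \<le> f (Send \<union> ?A)" using mon unfolding monotone_set_fun_def
      by (meson Un_upper2)
    also have "Send \<union> ?A = Send \<union> (?A - Send)" by auto
    also have "f \<dots> \<le> f Send + (\<Sum>b\<in>?A - Send. marg f Send b)"
    proof (rule sub_union[OF sm])
      show "finite (?A - Send)" using finL by simp
      show "?A - Send \<subseteq> set vs" using Asub by blast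
    qed (rule Sendsub)
    also have "?A - Send = (\<lambda>i. vs ! i) ` ?L'" by auto
    also have "(\<Sum>b\<in>(\<lambda>i. vs ! i) ` ?L'. marg f Send b) = (\<Sum>i\<in>?L'. marg f Send (vs!i))"
      by (rule sum.reindex_cong[OF inj_on_subset[OF injL]]) auto
    also have "\<dots> \<le> (\<Sum>i\<in>?L'. z i)"
    proof (rule sum_mono)
      fix i assume i: "i \<in> ?L'"
      then have "i < n" using L by auto
      then have "vs!i \<in> set vs" using n_def by simp
      then show "marg f Send (vs!i) \<le> z i" unfolding z_def S_def[symmetric]
        using i marg_dimin[OF mon sm SsubSend Sendsub] by simp
    qed
    also have "\<dots> \<le> (\<Sum>i\<in>L. z i)"
    proof (rule sum_mono2)
      show "finite L" by (rule finL)
      show "?L' \<subseteq> L" by blast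
      show "\<And>b. b \<in> L - ?L' \<Longrightarrow> 0 \<le> z b" using L znn by blast
    qed
    finally show ?thesis by simp
  qed
  have C2: "y i + (\<Sum>j \<in> {j. j < i \<and> E (vs ! i) (vs ! j)}. y j) \<ge> z i" if i: "i < n" for i
  proof (cases "vs!i \<in> Send")
    case True
    have "(\<Sum>j \<in> {j. j < i \<and> E (vs ! i) (vs ! j)}. y j) \<ge> 0" by (rule sum_nonneg) (use ynn in auto)
    then show ?thesis using True ynn[of i] unfolding z_def by simp
  next
    case False
    let ?N = "nbhd E (vs!i) \<inter> S i"
    let ?J = "{j. j < i \<and> E (vs ! i) (vs ! j)}"
    have nc: "\<not> cnd f E \<beta> vs i" using memSend i False by simp
    have zi: "z i = marg f (S i) (vs!i)" using False unfolding z_def S_def by simp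
    have m1: "marg f (S i) (vs!i) \<le> (1+\<beta>) * (\<Sum>u\<in>?N. snd (PP f E \<beta> vs i) u)"
      using nc unfolding cnd_def S_def by simp
    have e1: "(\<Sum>u\<in>?N. snd (PP f E \<beta> vs i) u) = (\<Sum>u\<in>?N. w u)"
      by (rule sum.cong) (auto simp: wS)
    have l2: "(\<Sum>u\<in>?N. w u) \<le> (\<Sum>u\<in>(\<lambda>j. vs!j) ` ?J. w u)"
    proof (rule sum_mono2)
      show "finite ((\<lambda>j. vs!j) ` ?J)" by simp
      show "?N \<subseteq> (\<lambda>j. vs!j) ` ?J"
      proof
        fix u assume u: "u \<in> ?N"
        have "u \<in> (\<lambda>i. vs!i) ` {..<n}" using u Ssub V by auto
        then obtain m where m: "m < n" "u = vs!m" by auto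
        then have "m < i" using memS[OF m(1), of i] u by auto
        then show "u \<in> (\<lambda>j. vs!j) ` ?J" using u m unfolding nbhd_def by auto
      qed
      show "\<And>b. b \<in> (\<lambda>j. vs!j) ` ?J - ?N \<Longrightarrow> 0 \<le> w b" using wnn by blast
    qed
    have injJ: "inj_on (\<lambda>j. vs!j) ?J"
    proof (rule inj_onI)
      fix x y assume "x \<in> ?J" "y \<in> ?J" "vs ! x = vs ! y"
      then show "x = y" using i nth_eq_iff_index_eq[OF dist, of x y] unfolding n_def by auto
    qed
    have e3: "(\<Sum>u\<in>(\<lambda>j. vs!j) ` ?J. w u) = (\<Sum>j\<in>?J. w (vs!j))"
      by (rule sum.reindex[OF injJ, unfolded comp_def])
    have e4: "(1+\<beta>) * (\<Sum>j\<in>?J. w (vs!j)) = (\<Sum>j\<in>?J. y j)" unfolding y_def by (simp add: sum_distrib_left)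
    have "(\<Sum>u\<in>?N. snd (PP f E \<beta> vs i) u) \<le> (\<Sum>j\<in>?J. w (vs!j))" using e1 l2 e3 by simp
    then have "(1+\<beta>) * (\<Sum>u\<in>?N. snd (PP f E \<beta> vs i) u) \<le> (1+\<beta>) * (\<Sum>j\<in>?J. w (vs!j))"
      using bpos by (intro mult_left_mono) auto
    then have "z i \<le> (\<Sum>j\<in>?J. y j)" using zi m1 e4 by linarith
    then show ?thesis using ynn[of i] by linarith
  qed
  have all: "(\<forall>L \<subseteq> {..<n}. f Send + (\<Sum>i\<in>L. z i) \<ge> f ((\<lambda>i. vs ! i) ` L))
      \<and> (\<forall>i < n. y i + (\<Sum>j \<in> {j. j < i \<and> E (vs ! i) (vs ! j)}. y j) \<ge> z i)
      \<and> (\<forall>i < n. y i \<ge> 0)" using C1 C2 ynn by simp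
  show ?thesis unfolding Let_def using all unfolding n_def Send_def w_def y_def z_def .
qed

end
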